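(* Let $0<\underline\beta<\bar\beta$ and let $\alpha,\xi>0$, $\varphi$, $\omega$ and the sets $\mathcal{J}(\beta,D)$ be as in the context. Let $\mathcal{P}'$ be a parameter set such that $\mathcal{J}(\beta,D)\subset\mathcal{H}(\beta,\mathcal{P}')$ for every $\beta\in[\underline\beta,\bar\beta]$ and every positive even integer $D$. Suppose one observes i.i.d. random variables $X_1,\dots,X_n$ with common density $s$ on $\mathbb{R}$. Then for every $\beta\in[\underline\beta,\bar\beta]$ there exists a constant $\kappa_\beta>0$ such that for all $n\ge1$, $$\inf_{\tilde s}\ \sup_{s\in\mathcal{H}(\beta,\mathcal{P}')}\mathbb{E}_s\big[d_H^2(s,\tilde s)\big]\ \ge\ \kappa_\beta\, n^{-\frac{2\beta}{2\beta+1}},$$ where the infimum is over all estimators $\tilde s$ (measurable functions of $X_1,\dots,X_n$).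
   Context: $\psi(x)=\pi^{-1/2}e^{-x^2}$, $\psi_\sigma(x)=\sigma^{-1}\psi(x/\sigma)$. Hellinger distance: $d_H(g,h)=\frac{1}{\sqrt2}\|\sqrt g-\sqrt h\|_{L^2}$. For $\beta>0$, $r$ is the largest integer strictly less than $\beta$. A parameter set $\mathcal{P}=\{\gamma,l^+,L,\varepsilon,C,\alpha,\xi,M\}$ consists of a polynomial $L$ and constants $\gamma,l^+,\varepsilon,C,\alpha,\xi,M$; $\mathcal{H}(\beta,\mathcal{P})$ is the set of probability densities $f$ on $\mathbb{R}$ with: $\ln f$ $r$ times differentiable, $|(\ln f)^{(r)}(x)-(\ln f)^{(r)}(y)|\le r!L(x)|y-x|^{\beta-r}$ whenever $|x-y|\le\gamma$, $|(\ln f)^{(j)}(0)|\le l^+$ for $j=0,\dots,r$; $\int|(\ln f)^{(j)}|^{(2\beta+\varepsilon)/j}f\le C$ ($j=1,\dots,r$) and $\int|L|^{2+\varepsilon/\beta}f\le C$; $f\le M\psi$; $f>0$, $f$ nondecreasing on $(-\infty,-\alpha)$, nonincreasing on $(\alpha,\infty)$, $f\ge\xi$ on $[-\alpha,\alpha]$. Construction: $\varphi:\mathbb{R}\to\mathbb{R}$ is infinitely differentiable with compact support in $(1/4,3/4)$, $\int\varphi=0$, $\int\varphi^2=1$; $A=\max_{0\le k\le r+1}\|\varphi^{(k)}\|_\infty$, assumed $>1$. For a positive even integer $D$ and $j\in\{1,\dots,D\}$, $\varphi_j(x)=\frac{\xi D^{-\beta}}{A}\varphi\big(\frac{D}{\alpha}(x+\frac\alpha2)-(j-1)\big)$.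 $\mathcal{T}(\alpha,\xi)$ is the set of functions $\omega:\mathbb{R}\to\mathbb{R}^+$ nondecreasing on $(-\infty,-\alpha/2)$, nonincreasing on $(\alpha/2,\infty)$, with $\omega=2\xi$ on $[-3\alpha/4,3\alpha/4]$ and $\omega(-\alpha)=\omega(\alpha)=\xi$. Fix $\omega\in\mathcal{T}(\alpha,\xi)\cap\mathcal{H}(\beta,\tilde{\mathcal P})$ for every $\beta\in[\underline\beta,\bar\beta]$, where $\tilde{\mathcal P}=\{\alpha/4,\ln(2\xi),\tilde L,\tilde\varepsilon,\tilde C,\alpha,\xi,\tilde M\}$. For $\theta\in\{0,1\}^D$, $f_\theta(x)=\omega(x)+\sum_{j=1}^D(2\theta_j-1)\varphi_j(x)$, and $\mathcal{J}(\beta,D)=\{f_\theta:\theta\in\{0,1\}^D\}$. *)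

theory Defs
  imports "HOL-Probability.Probability" "HOL-Computational_Algebra.Polynomial"
begin

definition psi :: "real \<Rightarrow> real" where
  "psi x = exp (- (x\<^sup>2)) / sqrt pi"

definition hellinger_sq :: "(real \<Rightarrow> real) \<Rightarrow> (real \<Rightarrow> real) \<Rightarrow> ennreal" where
  "hellinger_sq g h = (\<integral>\<^sup>+ x. ennreal ((sqrt (g x) - sqrt (h x))\<^sup>2 / 2) \<partial>lborel)"

text \<open>r = largest integer strictly less than beta (for beta > 0).\<close>
definition rr :: "real \<Rightarrow> nat" where
  "rr \<beta> = nat (\<lceil>\<beta>\<rceil> - 1)"

definition dn :: "nat \<Rightarrow> (real \<Rightarrow> real) \<Rightarrow> real \<Rightarrow> real" where
  "dn j g = (deriv ^^ j) g"

record params =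
  p_gamma :: real
  p_lplus :: real
  p_L :: "real poly"
  p_eps :: real
  p_C :: real
  p_alpha :: real
  p_xi :: real
  p_M :: real

definition is_density :: "(real \<Rightarrow> real) \<Rightarrow> bool" where
  "is_density f \<longleftrightarrow> f \<in> borel_measurable borel \<and> (\<forall>x. 0 \<le> f x)
      \<and> (\<integral>\<^sup>+ x. ennreal (f x) \<partial>lborel) = 1"

definition Hclass :: "real \<Rightarrow> params \<Rightarrow> (real \<Rightarrow> real) set" where
  "Hclass \<beta> P = {f. is_density f \<and>
     (let g = (\<lambda>x. ln (f x)); r = rr \<beta>; L = (\<lambda>x. poly (p_L P) x) in
       (\<forall>j<r. \<forall>x. dn j g differentiable at x)
     \<and> (\<forall>x y. \<bar>x - y\<bar> \<le> p_gamma P \<longrightarrow>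
           \<bar>dn r g x - dn r g y\<bar> \<le> fact r * L x * \<bar>y - x\<bar> powr (\<beta> - real r))
     \<and> (\<forall>j\<le>r. \<bar>dn j g 0\<bar> \<le> p_lplus P)
     \<and> (\<forall>j\<in>{1..r}. (\<integral>\<^sup>+ x. ennreal (\<bar>dn j g x\<bar> powr ((2*\<beta> + p_eps P) / real j) * f x) \<partial>lborel)
                     \<le> ennreal (p_C P))
     \<and> (\<integral>\<^sup>+ x. ennreal (\<bar>L x\<bar> powr (2 + p_eps P / \<beta>) * f x) \<partial>lborel) \<le> ennreal (p_C P)
     \<and> (\<forall>x. f x \<le> p_M P * psi x)
     \<and> (\<forall>x. 0 < f x)
     \<and> (\<forall>x y. x \<le> y \<and> y < - p_alpha P \<longrightarrow> f x \<le> f y)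
     \<and> (\<forall>x y. p_alpha P < x \<and> x \<le> y \<longrightarrow> f y \<le> f x)
     \<and> (\<forall>x\<in>{- p_alpha P .. p_alpha P}. p_xi P \<le> f x))}"

definition Aconst :: "(real \<Rightarrow> real) \<Rightarrow> real \<Rightarrow> real" where
  "Aconst \<phi> \<beta> = Max ((\<lambda>k. Sup (range (\<lambda>x. \<bar>dn k \<phi> x\<bar>))) ` {0..rr \<beta> + 1})"

definition phij :: "(real \<Rightarrow> real) \<Rightarrow> real \<Rightarrow> real \<Rightarrow> real \<Rightarrow> nat \<Rightarrow> nat \<Rightarrow> real \<Rightarrow> real" where
  "phij \<phi> \<alpha> \<xi> \<beta> D j x =
     \<xi> * real D powr (-\<beta>) / Aconst \<phi> \<beta> * \<phi> (real D / \<alpha> * (x + \<alpha> / 2) - (real j - 1))"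

definition Tclass :: "real \<Rightarrow> real \<Rightarrow> (real \<Rightarrow> real) set" where
  "Tclass \<alpha> \<xi> = {\<omega>. (\<forall>x. 0 \<le> \<omega> x)
     \<and> (\<forall>x y. x \<le> y \<and> y < - \<alpha> / 2 \<longrightarrow> \<omega> x \<le> \<omega> y)
     \<and> (\<forall>x y. \<alpha> / 2 < x \<and> x \<le> y \<longrightarrow> \<omega> y \<le> \<omega> x)
     \<and> (\<forall>x\<in>{- 3 * \<alpha> / 4 .. 3 * \<alpha> / 4}. \<omega> x = 2 * \<xi>)
     \<and> \<omega> (- \<alpha>) = \<xi> \<and> \<omega> \<alpha> = \<xi>}"

text \<open>J(beta,D) = { f_theta : theta in {0,1}^D }, theta encoded as a predicate on {1..D}.\<close>
definition Jclass :: "(real \<Rightarrow> real) \<Rightarrow> (real \<Rightarrow> real) \<Rightarrow> real \<Rightarrow> real \<Rightarrow> real \<Rightarrow> nat \<Rightarrow> (real \<Rightarrow> real) set" where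
  "Jclass \<phi> \<omega> \<alpha> \<xi> \<beta> D = {f. \<exists>\<theta> :: nat \<Rightarrow> bool.
      f = (\<lambda>x. \<omega> x + (\<Sum>j=1..D. (if \<theta> j then 1 else -1) * phij \<phi> \<alpha> \<xi> \<beta> D j x))}"

definition estimators :: "nat \<Rightarrow> ((nat \<Rightarrow> real) \<Rightarrow> real \<Rightarrow> real) set" where
  "estimators n = {est. (\<lambda>(X, x). est X x) \<in> borel_measurable (PiM {..<n} (\<lambda>_. lborel) \<Otimes>\<^sub>M lborel)
                        \<and> (\<forall>X x. 0 \<le> est X x)}"

definition risk :: "nat \<Rightarrow> (real \<Rightarrow> real) \<Rightarrow> ((nat \<Rightarrow> real) \<Rightarrow> real \<Rightarrow> real) \<Rightarrow> ennreal" where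
  "risk n s est = (\<integral>\<^sup>+ X. hellinger_sq s (est X) \<partial>(PiM {..<n} (\<lambda>_. density lborel (\<lambda>x. ennreal (s x)))))"

end

theory Submission
  imports Defs
begin

lemma PiM_density_lborel:
  fixes f :: "real \<Rightarrow> real" and I :: "'i set"
  assumes I: "finite I" and fm[measurable]: "f \<in> borel_measurable borel"
    and nn: "\<And>x. 0 \<le> f x" and one: "(\<integral>\<^sup>+ x. ennreal (f x) \<partial>lborel) = 1"
  shows "PiM I (\<lambda>_. density lborel (\<lambda>x. ennreal (f x)))
       = density (PiM I (\<lambda>_. lborel)) (\<lambda>X. ennreal (\<Prod>i\<in>I. f (X i)))"
proof -
  let ?M = "density lborel (\<lambda>x. ennreal (f x))"
  interpret M: prob_space ?M
    apply (rule prob_spaceI) apply (subst emeasure_density) apply simp apply simp using one by simp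
  interpret PM: product_sigma_finite "\<lambda>_. ?M"
    unfolding product_sigma_finite_def using M.sigma_finite_measure_axioms by blast
  interpret PL: product_sigma_finite "\<lambda>_. lborel :: real measure"
    unfolding product_sigma_finite_def using lborel.sigma_finite_measure_axioms by blast
  show ?thesis
  proof (rule PM.PiM_eqI[symmetric, OF I])
    show "sets (density (PiM I (\<lambda>_. lborel)) (\<lambda>X. ennreal (\<Prod>i\<in>I. f (X i)))) = sets (PiM I (\<lambda>_. ?M))"
      by (rule trans[OF sets_density sets_PiM_cong]) auto
  next
    fix A assume A: "\<And>i. i \<in> I \<Longrightarrow> A i \<in> sets ?M"
    then have A': "\<And>i. i \<in> I \<Longrightarrow> A i \<in> sets borel" by simp
    have PA: "Pi\<^sub>E I A \<in> sets (PiM I (\<lambda>_. lborel))"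
      using A' by (intro sets_PiM_I_finite I) auto
    have "emeasure (density (PiM I (\<lambda>_. lborel)) (\<lambda>X. ennreal (\<Prod>i\<in>I. f (X i)))) (Pi\<^sub>E I A)
       = (\<integral>\<^sup>+ X. ennreal (\<Prod>i\<in>I. f (X i)) * indicator (Pi\<^sub>E I A) X \<partial>PiM I (\<lambda>_. lborel))"
      using PA by (subst emeasure_density) auto
    also have "\<dots> = (\<integral>\<^sup>+ X. (\<Prod>i\<in>I. ennreal (f (X i)) * indicator (A i) (X i)) \<partial>PiM I (\<lambda>_. lborel))"
    proof (rule nn_integral_cong)
      fix X assume X: "X \<in> space (PiM I (\<lambda>_. lborel :: real measure))"
      then have ext: "X \<in> extensional I" by (simp add: space_PiM PiE_def)
      have "indicator (Pi\<^sub>E I A) X = (\<Prod>i\<in>I. indicator (A i) (X i) :: ennreal)"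
      proof (cases "\<forall>i\<in>I. X i \<in> A i")
        case True then show ?thesis using ext by (simp add: PiE_def Pi_def indicator_def)
      next
        case False
        then obtain i where "i \<in> I" "X i \<notin> A i" by blast
        then show ?thesis using I by (auto simp add: indicator_def PiE_def Pi_def intro!: prod_zero)
      qed
      then show "ennreal (\<Prod>i\<in>I. f (X i)) * indicator (Pi\<^sub>E I A) X = (\<Prod>i\<in>I. ennreal (f (X i)) * indicator (A i) (X i))"
        by (simp add: prod_ennreal nn prod.distrib)
    qed
    also have "\<dots> = (\<Prod>i\<in>I. \<integral>\<^sup>+ x. ennreal (f x) * indicator (A i) x \<partial>lborel)"
      using A' by (subst PL.product_nn_integral_prod[OF I]) auto
    also have "\<dots> = (\<Prod>i\<in>I. emeasure ?M (A i))"
      using A' by (intro prod.cong refl) (simp add: emeasure_density)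
    finally show "emeasure (density (PiM I (\<lambda>_. lborel)) (\<lambda>X. ennreal (\<Prod>i\<in>I. f (X i)))) (Pi\<^sub>E I A) = (\<Prod>i\<in>I. emeasure ?M (A i))" .
  qed
qed



lemma sqrt_diff_upper:
  fixes a b :: real assumes "0 < a" "0 < b"
  shows "(sqrt a - sqrt b)\<^sup>2 * (a + b) \<le> (a - b)\<^sup>2"
proof -
  have e: "(a - b)\<^sup>2 = (sqrt a - sqrt b)\<^sup>2 * (sqrt a + sqrt b)\<^sup>2"
    using assms by (simp add: power2_eq_square algebra_simps)
  have "a + b \<le> (sqrt a + sqrt b)\<^sup>2"
    using assms by (simp add: power2_eq_square algebra_simps)
  then show ?thesis unfolding e by (intro mult_left_mono) auto
qed

lemma sqrt_diff_lower:
  fixes a b :: real assumes "0 \<le> a" "0 \<le> b"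
  shows "(a - b)\<^sup>2 \<le> 2 * (a + b) * (sqrt a - sqrt b)\<^sup>2"
proof -
  have e: "(a - b)\<^sup>2 = (sqrt a - sqrt b)\<^sup>2 * (sqrt a + sqrt b)\<^sup>2"
    using assms by (simp add: power2_eq_square algebra_simps)
  have "(sqrt a + sqrt b)\<^sup>2 \<le> 2 * (a + b)"
  proof -
    have "0 \<le> (sqrt a - sqrt b)\<^sup>2" by simp
    then show ?thesis using assms by (simp add: power2_eq_square algebra_simps)
  qed
  then show ?thesis unfolding e
    by (metis mult.commute mult_left_mono zero_le_power2)
qed

lemma tri_sq: fixes x y z :: real shows "(x - y)\<^sup>2 / 2 \<le> (x - z)\<^sup>2 + (y - z)\<^sup>2"
proof -
  have "0 \<le> (x + y - 2*z)\<^sup>2" by simp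
  then have "(x - y)\<^sup>2 \<le> 2 * ((x - z)\<^sup>2 + (y - z)\<^sup>2)" by (simp add: power2_eq_square algebra_simps)
  then show ?thesis by simp
qed

lemma min_sq_lemma: fixes p q :: real assumes "0 \<le> p" "0 \<le> q"
  shows "5 * (p * q) \<le> min (p\<^sup>2) (q\<^sup>2) + 17/8 * (p\<^sup>2 + q\<^sup>2)"
proof (cases "p \<le> q")
  case True
  then have "min (p\<^sup>2) (q\<^sup>2) = p\<^sup>2" using assms by (simp add: power_mono min_def)
  moreover have "0 \<le> (5*p - 4*q)\<^sup>2 + q\<^sup>2" by simp
  ultimately show ?thesis by (simp add: power2_eq_square field_simps)
next
  case False
  then have "min (p\<^sup>2) (q\<^sup>2) = q\<^sup>2" using assms by (simp add: power_mono min_def)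
  moreover have "0 \<le> (5*q - 4*p)\<^sup>2 + p\<^sup>2" by simp
  ultimately show ?thesis by (simp add: power2_eq_square field_simps)
qed



lemma min_integral_lower:
  fixes P Q :: "'a \<Rightarrow> real"
  assumes [measurable]: "P \<in> borel_measurable M" "Q \<in> borel_measurable M"
    and nn: "\<And>x. 0 \<le> P x" "\<And>x. 0 \<le> Q x"
    and iP: "(\<integral>\<^sup>+ x. ennreal (P x) \<partial>M) = 1" and iQ: "(\<integral>\<^sup>+ x. ennreal (Q x) \<partial>M) = 1"
    and aff: "ennreal (19/20) \<le> (\<integral>\<^sup>+ x. ennreal (sqrt (P x * Q x)) \<partial>M)"
  shows "ennreal (1/2) \<le> (\<integral>\<^sup>+ x. ennreal (min (P x) (Q x)) \<partial>M)"
proof -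
  have pw: "ennreal 5 * ennreal (sqrt (P x * Q x)) \<le> ennreal (min (P x) (Q x)) + (ennreal (17/8) * ennreal (P x) + ennreal (17/8) * ennreal (Q x))" for x
  proof -
    have "5 * (sqrt (P x) * sqrt (Q x)) \<le> min ((sqrt (P x))\<^sup>2) ((sqrt (Q x))\<^sup>2) + 17/8 * ((sqrt (P x))\<^sup>2 + (sqrt (Q x))\<^sup>2)"
      by (rule min_sq_lemma) (use nn in auto)
    then have "5 * sqrt (P x * Q x) \<le> min (P x) (Q x) + (17/8 * P x + 17/8 * Q x)"
      using nn[of x] by (simp add: real_sqrt_mult field_simps)
    then have "ennreal (5 * sqrt (P x * Q x)) \<le> ennreal (min (P x) (Q x) + (17/8 * P x + 17/8 * Q x))"
      by (rule ennreal_leI)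
    moreover have "ennreal 5 * ennreal (sqrt (P x * Q x)) = ennreal (5 * sqrt (P x * Q x))"
      by (subst ennreal_mult) (use nn[of x] in auto)
    moreover have "ennreal (min (P x) (Q x)) + (ennreal (17/8) * ennreal (P x) + ennreal (17/8) * ennreal (Q x))
        = ennreal (min (P x) (Q x) + (17/8 * P x + 17/8 * Q x))"
      using nn[of x] by (simp add: ennreal_mult[symmetric] ennreal_plus[symmetric] del: ennreal_plus)
    ultimately show ?thesis by simp
  qed
  have "ennreal 5 * ennreal (19/20) \<le> ennreal 5 * (\<integral>\<^sup>+ x. ennreal (sqrt (P x * Q x)) \<partial>M)"
    using aff by (rule mult_left_mono) simp
  also have "\<dots> = (\<integral>\<^sup>+ x. ennreal 5 * ennreal (sqrt (P x * Q x)) \<partial>M)"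
    by (rule nn_integral_cmult[symmetric]) measurable
  also have "\<dots> \<le> (\<integral>\<^sup>+ x. ennreal (min (P x) (Q x)) + (ennreal (17/8) * ennreal (P x) + ennreal (17/8) * ennreal (Q x)) \<partial>M)"
    by (rule nn_integral_mono) (rule pw)
  also have "\<dots> = (\<integral>\<^sup>+ x. ennreal (min (P x) (Q x)) \<partial>M) + ennreal (17/4)"
    by (simp add: nn_integral_add nn_integral_cmult iP iQ ennreal_plus[symmetric] del: ennreal_plus)
  finally have **: "ennreal 5 * ennreal (19/20) \<le> (\<integral>\<^sup>+ x. ennreal (min (P x) (Q x)) \<partial>M) + ennreal (17/4)" .
  have e: "ennreal 5 * ennreal (19/20) = ennreal (19/4)"
    by (subst ennreal_mult[symmetric]) auto
  have *: "ennreal (19/4) \<le> (\<integral>\<^sup>+ x. ennreal (min (P x) (Q x)) \<partial>M) + ennreal (17/4)"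
    using ** unfolding e .
  show ?thesis
  proof (cases "(\<integral>\<^sup>+ x. ennreal (min (P x) (Q x)) \<partial>M)" rule: ennreal_cases)
    case (real r)
    have eq: "ennreal r + ennreal (17/4) = ennreal (r + 17/4)" by (subst ennreal_plus) (use real in auto)
    have "ennreal (19/4) \<le> ennreal (r + 17/4)" using * real unfolding eq by simp
    then have "19/4 \<le> r + 17/4" using real by (subst (asm) ennreal_le_iff) auto
    then have "1/2 \<le> r" by simp
    then have "ennreal (1/2) \<le> ennreal r" by (rule ennreal_leI)
    then show ?thesis using real by simp
  qed simp
qed

lemma prod_affinity:
  fixes f g :: "real \<Rightarrow> real"
  assumes [measurable]: "f \<in> borel_measurable borel" "g \<in> borel_measurable borel"
    and nn: "\<And>x. 0 \<le> f x" "\<And>x. 0 \<le> g x"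
  shows "(\<integral>\<^sup>+ X. ennreal (\<Prod>i<n. sqrt (f (X i) * g (X i))) \<partial>PiM {..<n} (\<lambda>_. lborel))
       = (\<integral>\<^sup>+ x. ennreal (sqrt (f x * g x)) \<partial>lborel) ^ n"
proof -
  interpret PL: product_sigma_finite "\<lambda>_. lborel :: real measure"
    unfolding product_sigma_finite_def using lborel.sigma_finite_measure_axioms by blast
  have "(\<integral>\<^sup>+ X. ennreal (\<Prod>i<n. sqrt (f (X i) * g (X i))) \<partial>PiM {..<n} (\<lambda>_. lborel))
      = (\<integral>\<^sup>+ X. (\<Prod>i<n. ennreal (sqrt (f (X i) * g (X i)))) \<partial>PiM {..<n} (\<lambda>_. lborel))"
    using nn by (subst prod_ennreal) auto
  also have "\<dots> = (\<Prod>i<n. \<integral>\<^sup>+ x. ennreal (sqrt (f x * g x)) \<partial>lborel)"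
    by (subst PL.product_nn_integral_prod) auto
  finally show ?thesis by simp
qed



locale lbsetup =
  fixes \<phi> \<omega> :: "real \<Rightarrow> real" and \<alpha> \<xi> \<beta> :: real and P' :: params and a b :: real
  assumes \<alpha>_pos: "0 < \<alpha>" and \<xi>_pos: "0 < \<xi>" and \<beta>_pos: "0 < \<beta>"
    and phi_cont: "continuous_on UNIV \<phi>"
    and ab: "1/4 < a" "b < 3/4" and supp: "\<forall>x. x \<notin> {a..b} \<longrightarrow> \<phi> x = 0"
    and phi_sq: "(\<integral>\<^sup>+x. ennreal ((\<phi> x)\<^sup>2) \<partial>lborel) = 1"
    and A_pos: "0 < Aconst \<phi> \<beta>"
    and omega_mid: "\<forall>x\<in>{- 3 * \<alpha> / 4 .. 3 * \<alpha> / 4}. \<omega> x = 2 * \<xi>"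
    and Jsub: "\<forall>D. even D \<and> 0 < D \<longrightarrow> Jclass \<phi> \<omega> \<alpha> \<xi> \<beta> D \<subseteq> Hclass \<beta> P'"
begin

definition cc :: "nat \<Rightarrow> real" where "cc D = \<xi> * real D powr (-\<beta>) / Aconst \<phi> \<beta>"
definition tt :: "nat \<Rightarrow> nat \<Rightarrow> real \<Rightarrow> real" where "tt D j x = real D / \<alpha> * (x + \<alpha> / 2) - (real j - 1)"
definition u :: "nat \<Rightarrow> nat \<Rightarrow> real \<Rightarrow> real" where "u D j x = cc D * \<phi> (tt D j x)"
definition fS :: "nat \<Rightarrow> nat set \<Rightarrow> real \<Rightarrow> real" where
  "fS D S x = \<omega> x + (\<Sum>j=1..D. (if j \<in> S then 1 else -1) * u D j x)"

lemma phi_meas[measurable]: "\<phi> \<in> borel_measurable borel"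
  using phi_cont by (intro borel_measurable_continuous_onI) simp

lemma u_meas[measurable]: "u D j \<in> borel_measurable borel"
  unfolding u_def tt_def by measurable

lemma cc_pos: "0 < D \<Longrightarrow> 0 < cc D"
  unfolding cc_def using \<xi>_pos A_pos by (intro divide_pos_pos mult_pos_pos) auto

lemma u_eq: "u D j = phij \<phi> \<alpha> \<xi> \<beta> D j"
  by (rule ext) (simp add: u_def phij_def cc_def tt_def)

lemma fS_J: "fS D S \<in> Jclass \<phi> \<omega> \<alpha> \<xi> \<beta> D"
  unfolding Jclass_def
  by (rule CollectI, rule exI[of _ "\<lambda>j. j \<in> S"]) (simp add: fun_eq_iff fS_def u_eq[symmetric])

lemma fS_H: "even D \<Longrightarrow> 0 < D \<Longrightarrow> fS D S \<in> Hclass \<beta> P'"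
  using Jsub fS_J by blast

lemma H_props:
  assumes "f \<in> Hclass \<beta> P'"
  shows "f \<in> borel_measurable borel" "\<And>x. 0 < f x" "(\<integral>\<^sup>+ x. ennreal (f x) \<partial>lborel) = 1"
  using assms unfolding Hclass_def is_density_def Let_def by auto

lemma supp_u:
  assumes D: "0 < D" and j: "j \<in> {1..D}" and nz: "u D j x \<noteq> 0"
  shows "\<omega> x = 2 * \<xi>" "\<And>k. k \<noteq> j \<Longrightarrow> u D k x = 0"
proof -
  have "\<phi> (tt D j x) \<noteq> 0" using nz by (auto simp: u_def)
  then have t: "a \<le> tt D j x" "tt D j x \<le> b" using supp by auto
  have Dp: "0 < real D" using D by simp
  have xe: "x + \<alpha>/2 = \<alpha> / real D * (tt D j x + real j - 1)"
    using Dp \<alpha>_pos by (simp add: tt_def field_simps)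
  have j1: "1 \<le> real j" "real j \<le> real D" using j by auto
  have "0 < tt D j x + real j - 1" using t ab j1 by linarith
  then have "0 < x + \<alpha>/2" unfolding xe using Dp \<alpha>_pos by simp
  moreover have "tt D j x + real j - 1 < real D" using t ab j1 by linarith
  then have "\<alpha> / real D * (tt D j x + real j - 1) < \<alpha> / real D * real D"
    using Dp \<alpha>_pos by (intro mult_strict_left_mono) auto
  then have "x + \<alpha>/2 < \<alpha>" unfolding xe using Dp by simp
  ultimately have "x \<in> {- 3 * \<alpha> / 4 .. 3 * \<alpha> / 4}" using \<alpha>_pos by auto
  then show "\<omega> x = 2 * \<xi>" using omega_mid by auto
  fix k assume kj: "k \<noteq> j"
  show "u D k x = 0"
  proof (rule ccontr)
    assume "u D k x \<noteq> 0"
    then have "\<phi> (tt D k x) \<noteq> 0" by (auto simp: u_def)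
    then have t2: "a \<le> tt D k x" "tt D k x \<le> b" using supp by auto
    have "tt D k x = tt D j x + (real j - real k)" by (simp add: tt_def)
    then have "\<bar>real j - real k\<bar> < 1" using t t2 ab by linarith
    then show False using kj by linarith
  qed
qed

end

context lbsetup begin

lemma tt_meas[measurable]: "tt D j \<in> borel_measurable borel"
  unfolding tt_def by measurable

lemma fS_on_supp:
  assumes D: "0 < D" and j: "j \<in> {1..D}" and nz: "u D j x \<noteq> 0"
  shows "fS D S x = 2 * \<xi> + (if j \<in> S then 1 else -1) * u D j x"
proof -
  have "(\<Sum>k=1..D. (if k \<in> S then 1 else -1) * u D k x)
      = (if j \<in> S then 1 else -1) * u D j x + (\<Sum>k\<in>{1..D}-{j}. (if k \<in> S then 1 else -1) * u D k x)"
    using j by (subst sum.remove) auto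
  also have "(\<Sum>k\<in>{1..D}-{j}. (if k \<in> S then 1 else -1) * u D k x) = 0"
    using supp_u(2)[OF D j nz] by (intro sum.neutral) auto
  finally show ?thesis using supp_u(1)[OF D j nz] by (simp add: fS_def)
qed

lemma fS_insert:
  assumes j: "j \<in> {1..D}" and jS: "j \<notin> S"
  shows "fS D (insert j S) x = fS D S x + 2 * u D j x"
proof -
  have a: "(\<Sum>k=1..D. (if k \<in> insert j S then 1 else -1) * u D k x)
      = u D j x + (\<Sum>k\<in>{1..D}-{j}. (if k \<in> insert j S then 1 else -1) * u D k x)"
    using j by (subst sum.remove) auto
  have b: "(\<Sum>k=1..D. (if k \<in> S then 1 else -1) * u D k x)
      = - u D j x + (\<Sum>k\<in>{1..D}-{j}. (if k \<in> S then 1 else -1) * u D k x)"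
    using j jS by (subst sum.remove) auto
  have c: "(\<Sum>k\<in>{1..D}-{j}. (if k \<in> insert j S then 1 else -1) * u D k x)
      = (\<Sum>k\<in>{1..D}-{j}. (if k \<in> S then 1 else -1) * u D k x)"
    by (intro sum.cong) auto
  show ?thesis unfolding fS_def a b c by simp
qed

lemma u_sq_int:
  assumes D: "0 < D"
  shows "(\<integral>\<^sup>+ x. ennreal ((u D j x)\<^sup>2) \<partial>lborel) = ennreal ((cc D)\<^sup>2 * \<alpha> / real D)"
proof -
  have Dp: "0 < real D" using D by simp
  have "(1::ennreal) = (\<integral>\<^sup>+x. ennreal ((\<phi> x)\<^sup>2) \<partial>lborel)" using phi_sq by simp
  also have "\<dots> = ennreal \<bar>real D / \<alpha>\<bar> * (\<integral>\<^sup>+x. ennreal ((\<phi> (real D / 2 - (real j - 1) + real D / \<alpha> * x))\<^sup>2) \<partial>lborel)"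
    using Dp \<alpha>_pos by (intro nn_integral_real_affine) auto
  also have "(\<lambda>x. real D / 2 - (real j - 1) + real D / \<alpha> * x) = tt D j"
    using \<alpha>_pos by (auto simp: fun_eq_iff tt_def field_simps)
  finally have e1: "1 = ennreal (real D / \<alpha>) * (\<integral>\<^sup>+x. ennreal ((\<phi> (tt D j x))\<^sup>2) \<partial>lborel)"
    using Dp \<alpha>_pos by simp
  have "ennreal (\<alpha> / real D) = ennreal (\<alpha> / real D) * ennreal (real D / \<alpha>) * (\<integral>\<^sup>+x. ennreal ((\<phi> (tt D j x))\<^sup>2) \<partial>lborel)"
    by (simp add: e1[symmetric] mult.assoc)
  also have "ennreal (\<alpha> / real D) * ennreal (real D / \<alpha>) = 1"
    using Dp \<alpha>_pos by (simp add: ennreal_mult[symmetric])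
  finally have e2: "(\<integral>\<^sup>+x. ennreal ((\<phi> (tt D j x))\<^sup>2) \<partial>lborel) = ennreal (\<alpha> / real D)" by simp
  have "(\<integral>\<^sup>+ x. ennreal ((u D j x)\<^sup>2) \<partial>lborel) = (\<integral>\<^sup>+ x. ennreal ((cc D)\<^sup>2) * ennreal ((\<phi> (tt D j x))\<^sup>2) \<partial>lborel)"
    by (intro nn_integral_cong) (simp add: u_def power_mult_distrib ennreal_mult[symmetric])
  also have "\<dots> = ennreal ((cc D)\<^sup>2) * ennreal (\<alpha> / real D)"
    by (subst nn_integral_cmult) (auto simp: e2)
  also have "\<dots> = ennreal ((cc D)\<^sup>2 * \<alpha> / real D)"
    using Dp \<alpha>_pos by (simp add: ennreal_mult[symmetric])
  finally show ?thesis .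
qed

end

context lbsetup begin

definition Ej :: "nat \<Rightarrow> nat \<Rightarrow> real set" where "Ej D j = {x. u D j x \<noteq> 0}"
definition Aj :: "nat \<Rightarrow> nat \<Rightarrow> nat set \<Rightarrow> (real \<Rightarrow> real) \<Rightarrow> ennreal" where
  "Aj D j S h = (\<integral>\<^sup>+x. ennreal (indicator (Ej D j) x * ((sqrt (fS D S x) - sqrt (h x))\<^sup>2 / 2)) \<partial>lborel)"

lemma Ej_meas[measurable]: "Ej D j \<in> sets borel"
  unfolding Ej_def by measurable

lemma fS_meas[measurable]: "fS D S \<in> borel_measurable borel"
  unfolding fS_def
proof -
  have "\<omega> \<in> borel_measurable borel"
  proof -
    have "fS 2 {} \<in> borel_measurable borel" using H_props(1)[OF fS_H[of 2 "{}"]] by simp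
    then have "(\<lambda>x. fS 2 {} x - (\<Sum>j=1..2. (if j \<in> {} then 1 else -1) * u 2 j x)) \<in> borel_measurable borel"
      by measurable
    then show ?thesis by (simp add: fS_def)
  qed
  then show "(\<lambda>x. \<omega> x + (\<Sum>j = 1..D. (if j \<in> S then 1 else - 1) * u D j x)) \<in> borel_measurable borel"
    by measurable
qed

lemma sqrt_id: fixes p q :: real assumes "0 \<le> p" "0 \<le> q"
  shows "(sqrt p - sqrt q)\<^sup>2 = p + q - 2 * sqrt (p * q)"
  using assms by (simp add: power2_eq_square algebra_simps real_sqrt_mult)

lemma aff_pointwise:
  assumes D: "even D" "0 < D" and j: "j \<in> {1..D}" and jS: "j \<notin> S"
  shows "(fS D S x + fS D (insert j S) x) / 2 \<le> sqrt (fS D S x * fS D (insert j S) x) + (u D j x)\<^sup>2 / (2 * \<xi>)"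
proof (cases "u D j x = 0")
  case True
  then have "fS D (insert j S) x = fS D S x" using fS_insert[OF j jS] by simp
  moreover have "0 < fS D S x" using H_props(2)[OF fS_H[OF D]] by blast
  ultimately show ?thesis using \<xi>_pos by simp
next
  case False
  let ?a = "fS D S x" and ?b = "fS D (insert j S) x" and ?u = "u D j x"
  have pa: "0 < ?a" "0 < ?b" using H_props(2)[OF fS_H[OF D]] by blast+
  have ea: "?a = 2 * \<xi> - ?u" using fS_on_supp[OF _ j False, of S] D jS by simp
  have eb: "?b = 2 * \<xi> + ?u" using fS_on_supp[OF _ j False, of "insert j S"] D by simp
  have "(sqrt ?a - sqrt ?b)\<^sup>2 * (?a + ?b) \<le> (?a - ?b)\<^sup>2" by (rule sqrt_diff_upper[OF pa])
  then have "(sqrt ?a - sqrt ?b)\<^sup>2 * (4 * \<xi>) \<le> 4 * ?u\<^sup>2" unfolding ea eb by (simp add: power2_eq_square algebra_simps)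
  then have "(sqrt ?a - sqrt ?b)\<^sup>2 \<le> ?u\<^sup>2 / \<xi>" using \<xi>_pos by (simp add: field_simps)
  then show ?thesis using sqrt_id[of ?a ?b] pa by (simp add: field_simps)
qed

definition eta :: "nat \<Rightarrow> real" where "eta D = (cc D)\<^sup>2 * \<alpha> / (2 * \<xi> * real D)"
definition delta :: "nat \<Rightarrow> real" where "delta D = (cc D)\<^sup>2 * \<alpha> / (8 * \<xi> * real D)"

lemma ennreal_one_minus_le:
  fixes x :: ennreal assumes "1 \<le> x + ennreal e" "0 \<le> e"
  shows "ennreal (1 - e) \<le> x"
proof (cases x rule: ennreal_cases)
  case (real r)
  have eq: "ennreal r + ennreal e = ennreal (r + e)" by (subst ennreal_plus) (use real assms in auto)
  have "1 \<le> ennreal r + ennreal e" using assms(1) real by simp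
  then have "ennreal 1 \<le> ennreal (r + e)" unfolding eq by simp
  then have "1 \<le> r + e" using real assms by (subst (asm) ennreal_le_iff) auto
  then have "1 - e \<le> r" by simp
  then have "ennreal (1 - e) \<le> ennreal r" by (rule ennreal_leI)
  then show ?thesis using real by simp
qed simp

lemma half_sum: fixes p q :: real assumes "0 \<le> p" "0 \<le> q"
  shows "ennreal (1/2) * ennreal p + ennreal (1/2) * ennreal q = ennreal ((p + q) / 2)"
proof -
  have "ennreal (1/2) * ennreal p = ennreal (p/2)" using assms by (subst ennreal_mult[symmetric]) auto
  moreover have "ennreal (1/2) * ennreal q = ennreal (q/2)" using assms by (subst ennreal_mult[symmetric]) auto
  moreover have "ennreal (p/2) + ennreal (q/2) = ennreal ((p + q) / 2)"
    using assms by (subst ennreal_plus[symmetric]) (auto simp: add_divide_distrib)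
  ultimately show ?thesis by simp
qed

lemma affinity_bound:
  assumes D: "even D" "0 < D" and j: "j \<in> {1..D}" and jS: "j \<notin> S"
  shows "ennreal (1 - eta D) \<le> (\<integral>\<^sup>+x. ennreal (sqrt (fS D S x * fS D (insert j S) x)) \<partial>lborel)"
proof (rule ennreal_one_minus_le)
  let ?a = "fS D S" and ?b = "fS D (insert j S)"
  have pa: "\<And>x. 0 < ?a x" "\<And>x. 0 < ?b x" using H_props(2)[OF fS_H[OF D]] by blast+
  have ia: "(\<integral>\<^sup>+ x. ennreal (?a x) \<partial>lborel) = 1" "(\<integral>\<^sup>+ x. ennreal (?b x) \<partial>lborel) = 1"
    using H_props(3)[OF fS_H[OF D]] by blast+
  have "(1::ennreal) = ennreal (1/2) * (\<integral>\<^sup>+ x. ennreal (?a x) \<partial>lborel) + ennreal (1/2) * (\<integral>\<^sup>+ x. ennreal (?b x) \<partial>lborel)"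
    unfolding ia using ennreal_plus[of "1/2" "1/2"] by simp
  also have "\<dots> = (\<integral>\<^sup>+ x. ennreal (1/2) * ennreal (?a x) + ennreal (1/2) * ennreal (?b x) \<partial>lborel)"
    by (simp add: nn_integral_add nn_integral_cmult)
  also have "\<dots> \<le> (\<integral>\<^sup>+ x. ennreal (sqrt (?a x * ?b x)) + ennreal (1 / (2 * \<xi>)) * ennreal ((u D j x)\<^sup>2) \<partial>lborel)"
  proof (rule nn_integral_mono)
    fix x
    have "ennreal (1/2) * ennreal (?a x) + ennreal (1/2) * ennreal (?b x) = ennreal ((?a x + ?b x) / 2)"
      using pa[of x] by (intro half_sum) auto
    also have "\<dots> \<le> ennreal (sqrt (?a x * ?b x) + (u D j x)\<^sup>2 / (2 * \<xi>))"
      by (rule ennreal_leI, rule aff_pointwise[OF D j jS])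
    also have "\<dots> = ennreal (sqrt (?a x * ?b x)) + ennreal (1 / (2 * \<xi>)) * ennreal ((u D j x)\<^sup>2)"
      using pa[of x] \<xi>_pos by (simp add: ennreal_mult[symmetric] ennreal_plus[symmetric] del: ennreal_plus)
    finally show "ennreal (1/2) * ennreal (?a x) + ennreal (1/2) * ennreal (?b x) \<le> ennreal (sqrt (?a x * ?b x)) + ennreal (1 / (2 * \<xi>)) * ennreal ((u D j x)\<^sup>2)" .
  qed
  also have "\<dots> = (\<integral>\<^sup>+ x. ennreal (sqrt (?a x * ?b x)) \<partial>lborel) + ennreal (eta D)"
  proof -
    have "(\<integral>\<^sup>+ x. ennreal (sqrt (?a x * ?b x)) + ennreal (1 / (2 * \<xi>)) * ennreal ((u D j x)\<^sup>2) \<partial>lborel)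
       = (\<integral>\<^sup>+ x. ennreal (sqrt (?a x * ?b x)) \<partial>lborel) + (\<integral>\<^sup>+ x. ennreal (1 / (2 * \<xi>)) * ennreal ((u D j x)\<^sup>2) \<partial>lborel)"
      by (rule nn_integral_add) auto
    also have "(\<integral>\<^sup>+ x. ennreal (1 / (2 * \<xi>)) * ennreal ((u D j x)\<^sup>2) \<partial>lborel) = ennreal (1 / (2 * \<xi>)) * (\<integral>\<^sup>+ x. ennreal ((u D j x)\<^sup>2) \<partial>lborel)"
      by (rule nn_integral_cmult) auto
    also have "\<dots> = ennreal (eta D)"
      unfolding u_sq_int[OF D(2)] eta_def using \<xi>_pos \<alpha>_pos by (subst ennreal_mult[symmetric]) (auto simp: field_simps)
    finally show ?thesis .
  qed
  finally show "1 \<le> (\<integral>\<^sup>+ x. ennreal (sqrt (?a x * ?b x)) \<partial>lborel) + ennreal (eta D)" .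
  show "0 \<le> eta D" unfolding eta_def using \<xi>_pos \<alpha>_pos by simp
qed

end

context lbsetup begin

lemma sep_pointwise:
  assumes D: "even D" "0 < D" and j: "j \<in> {1..D}" and jS: "j \<notin> S" and h: "0 \<le> hx"
  shows "(u D j x)\<^sup>2 / (8 * \<xi>) \<le> indicator (Ej D j) x * ((sqrt (fS D S x) - sqrt hx)\<^sup>2 / 2)
          + indicator (Ej D j) x * ((sqrt (fS D (insert j S) x) - sqrt hx)\<^sup>2 / 2)"
proof (cases "u D j x = 0")
  case True then show ?thesis by (simp add: Ej_def)
next
  case False
  let ?a = "fS D S x" and ?b = "fS D (insert j S) x" and ?u = "u D j x"
  have ind: "indicator (Ej D j) x = (1::real)" using False by (simp add: Ej_def)
  have pa: "0 < ?a" "0 < ?b" using H_props(2)[OF fS_H[OF D]] by blast+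
  have ea: "?a = 2 * \<xi> - ?u" using fS_on_supp[OF _ j False, of S] D jS by simp
  have eb: "?b = 2 * \<xi> + ?u" using fS_on_supp[OF _ j False, of "insert j S"] D by simp
  have "(?a - ?b)\<^sup>2 \<le> 2 * (?a + ?b) * (sqrt ?a - sqrt ?b)\<^sup>2" by (rule sqrt_diff_lower) (use pa in auto)
  then have "4 * ?u\<^sup>2 \<le> 8 * \<xi> * (sqrt ?a - sqrt ?b)\<^sup>2" unfolding ea eb by (simp add: power2_eq_square algebra_simps)
  then have 1: "?u\<^sup>2 / (8 * \<xi>) \<le> (sqrt ?a - sqrt ?b)\<^sup>2 / 4" using \<xi>_pos by (simp add: field_simps)
  have 2: "(sqrt ?a - sqrt ?b)\<^sup>2 / 2 \<le> (sqrt ?a - sqrt hx)\<^sup>2 + (sqrt ?b - sqrt hx)\<^sup>2" by (rule tri_sq)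
  show ?thesis unfolding ind using 1 2 by simp
qed

lemma sep_bound:
  assumes D: "even D" "0 < D" and j: "j \<in> {1..D}" and jS: "j \<notin> S"
    and hm[measurable]: "h \<in> borel_measurable borel" and hn: "\<And>x. 0 \<le> h x"
  shows "ennreal (delta D) \<le> Aj D j S h + Aj D j (insert j S) h"
proof -
  have "ennreal (delta D) = ennreal (1 / (8 * \<xi>)) * (\<integral>\<^sup>+ x. ennreal ((u D j x)\<^sup>2) \<partial>lborel)"
    unfolding u_sq_int[OF D(2)] delta_def using \<xi>_pos \<alpha>_pos by (subst ennreal_mult[symmetric]) (auto simp: field_simps)
  also have "\<dots> = (\<integral>\<^sup>+ x. ennreal (1 / (8 * \<xi>)) * ennreal ((u D j x)\<^sup>2) \<partial>lborel)"
    by (rule nn_integral_cmult[symmetric]) auto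
  also have "\<dots> \<le> (\<integral>\<^sup>+ x. ennreal (indicator (Ej D j) x * ((sqrt (fS D S x) - sqrt (h x))\<^sup>2 / 2))
          + ennreal (indicator (Ej D j) x * ((sqrt (fS D (insert j S) x) - sqrt (h x))\<^sup>2 / 2)) \<partial>lborel)"
  proof (rule nn_integral_mono)
    fix x
    have "ennreal (1 / (8 * \<xi>)) * ennreal ((u D j x)\<^sup>2) = ennreal ((u D j x)\<^sup>2 / (8 * \<xi>))"
      using \<xi>_pos by (subst ennreal_mult[symmetric]) auto
    also have "\<dots> \<le> ennreal (indicator (Ej D j) x * ((sqrt (fS D S x) - sqrt (h x))\<^sup>2 / 2)
          + indicator (Ej D j) x * ((sqrt (fS D (insert j S) x) - sqrt (h x))\<^sup>2 / 2))"
      by (rule ennreal_leI, rule sep_pointwise[OF D j jS hn])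
    also have "\<dots> = ennreal (indicator (Ej D j) x * ((sqrt (fS D S x) - sqrt (h x))\<^sup>2 / 2))
          + ennreal (indicator (Ej D j) x * ((sqrt (fS D (insert j S) x) - sqrt (h x))\<^sup>2 / 2))"
      by (rule ennreal_plus) auto
    finally show "ennreal (1 / (8 * \<xi>)) * ennreal ((u D j x)\<^sup>2) \<le> ennreal (indicator (Ej D j) x * ((sqrt (fS D S x) - sqrt (h x))\<^sup>2 / 2))
          + ennreal (indicator (Ej D j) x * ((sqrt (fS D (insert j S) x) - sqrt (h x))\<^sup>2 / 2))" .
  qed
  also have "\<dots> = Aj D j S h + Aj D j (insert j S) h"
    unfolding Aj_def by (rule nn_integral_add) auto
  finally show ?thesis .
qed

lemma ind_sum_le1:
  assumes D: "0 < D"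
  shows "(\<Sum>j=1..D. indicator (Ej D j) x) \<le> (1::real)"
proof (cases "\<exists>j\<in>{1..D}. x \<in> Ej D j")
  case True
  then obtain j where j: "j \<in> {1..D}" "x \<in> Ej D j" by blast
  then have nz: "u D j x \<noteq> 0" by (simp add: Ej_def)
  have "(\<Sum>j=1..D. indicator (Ej D j) x) = indicator (Ej D j) x + (\<Sum>k\<in>{1..D}-{j}. indicator (Ej D k) x :: real)"
    using j by (subst sum.remove) auto
  also have "(\<Sum>k\<in>{1..D}-{j}. indicator (Ej D k) x :: real) = 0"
    using supp_u(2)[OF D j(1) nz] by (intro sum.neutral) (auto simp: Ej_def)
  finally show ?thesis using j by simp
next
  case False
  then have "(\<Sum>j=1..D. indicator (Ej D j) x) = (0::real)" by (intro sum.neutral) auto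
  then show ?thesis by simp
qed

lemma sum_bound:
  assumes D: "0 < D"
    and hm[measurable]: "h \<in> borel_measurable borel" and hn: "\<And>x. 0 \<le> h x"
  shows "(\<Sum>j=1..D. Aj D j S h) \<le> hellinger_sq (fS D S) h"
proof -
  have "(\<Sum>j=1..D. Aj D j S h) = (\<integral>\<^sup>+x. (\<Sum>j=1..D. ennreal (indicator (Ej D j) x * ((sqrt (fS D S x) - sqrt (h x))\<^sup>2 / 2))) \<partial>lborel)"
    unfolding Aj_def by (rule nn_integral_sum[symmetric]) auto
  also have "\<dots> \<le> (\<integral>\<^sup>+x. ennreal ((sqrt (fS D S x) - sqrt (h x))\<^sup>2 / 2) \<partial>lborel)"
  proof (rule nn_integral_mono)
    fix x
    let ?g = "(sqrt (fS D S x) - sqrt (h x))\<^sup>2 / 2"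
    have "(\<Sum>j=1..D. ennreal (indicator (Ej D j) x * ?g)) = ennreal (\<Sum>j=1..D. indicator (Ej D j) x * ?g)"
      by (rule sum_ennreal) auto
    also have "(\<Sum>j=1..D. indicator (Ej D j) x * ?g) = (\<Sum>j=1..D. indicator (Ej D j) x) * ?g"
      by (simp add: sum_distrib_right)
    also have "\<dots> \<le> 1 * ?g" by (rule mult_right_mono[OF ind_sum_le1[OF D]]) simp
    finally show "(\<Sum>j=1..D. ennreal (indicator (Ej D j) x * ?g)) \<le> ennreal ?g" by (simp add: ennreal_leI)
  qed
  finally show ?thesis unfolding hellinger_sq_def .
qed

end


lemma sqrt_prod: "sqrt (\<Prod>i\<in>I. f i) = (\<Prod>i\<in>I. sqrt (f i))"
  by (induction I rule: infinite_finite_induct) (auto simp: real_sqrt_mult)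

lemma prod_int:
  fixes f :: "real \<Rightarrow> real"
  assumes [measurable]: "f \<in> borel_measurable borel" and nn: "\<And>x. 0 \<le> f x"
  shows "(\<integral>\<^sup>+ X. ennreal (\<Prod>i<n. f (X i)) \<partial>PiM {..<n} (\<lambda>_. lborel))
       = (\<integral>\<^sup>+ x. ennreal (f x) \<partial>lborel) ^ n"
proof -
  interpret PL: product_sigma_finite "\<lambda>_. lborel :: real measure"
    unfolding product_sigma_finite_def using lborel.sigma_finite_measure_axioms by blast
  have "(\<integral>\<^sup>+ X. ennreal (\<Prod>i<n. f (X i)) \<partial>PiM {..<n} (\<lambda>_. lborel))
      = (\<integral>\<^sup>+ X. (\<Prod>i<n. ennreal (f (X i))) \<partial>PiM {..<n} (\<lambda>_. lborel))"
    using nn by (subst prod_ennreal) auto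
  also have "\<dots> = (\<Prod>i<n. \<integral>\<^sup>+ x. ennreal (f x) \<partial>lborel)"
    by (subst PL.product_nn_integral_prod) auto
  finally show ?thesis by simp
qed

context lbsetup begin

definition PP :: "nat \<Rightarrow> nat \<Rightarrow> nat set \<Rightarrow> (nat \<Rightarrow> real) \<Rightarrow> real" where
  "PP n D S X = (\<Prod>i<n. fS D S (X i))"

lemma PP_meas[measurable]: "PP n D S \<in> borel_measurable (PiM {..<n} (\<lambda>_. lborel))"
  unfolding PP_def by measurable

lemma expect_dens:
  assumes D: "even D" "0 < D" and g[measurable]: "g \<in> borel_measurable (PiM {..<n} (\<lambda>_. lborel))"
  shows "(\<integral>\<^sup>+X. g X \<partial>PiM {..<n} (\<lambda>_. density lborel (\<lambda>x. ennreal (fS D S x))))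
       = (\<integral>\<^sup>+X. ennreal (PP n D S X) * g X \<partial>PiM {..<n} (\<lambda>_. lborel))"
proof -
  have "PiM {..<n} (\<lambda>_. density lborel (\<lambda>x. ennreal (fS D S x)))
      = density (PiM {..<n} (\<lambda>_. lborel)) (\<lambda>X. ennreal (\<Prod>i\<in>{..<n}. fS D S (X i)))"
    using H_props[OF fS_H[OF D]] by (intro PiM_density_lborel) (auto intro: less_imp_le)
  then show ?thesis by (simp add: nn_integral_density PP_def)
qed

lemma est_meas:
  assumes "est \<in> estimators n"
  shows "(\<lambda>p. est (fst p) (snd p)) \<in> borel_measurable (PiM {..<n} (\<lambda>_. lborel) \<Otimes>\<^sub>M lborel)"
    and "\<And>X x. 0 \<le> est X x"
  using assms unfolding estimators_def by (auto simp: case_prod_beta')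

lemma est_meas2:
  assumes "est \<in> estimators n" and X: "X \<in> space (PiM {..<n} (\<lambda>_. lborel :: real measure))"
  shows "est X \<in> borel_measurable borel"
proof -
  have "(\<lambda>x. (\<lambda>p. est (fst p) (snd p)) (X, x)) \<in> borel_measurable lborel"
    by (rule measurable_Pair2[OF est_meas(1)[OF assms(1)] X])
  then show ?thesis by simp
qed

lemma Aj_meas:
  assumes "est \<in> estimators n"
  shows "(\<lambda>X. Aj D j S (est X)) \<in> borel_measurable (PiM {..<n} (\<lambda>_. lborel))"
proof -
  note [measurable] = est_meas(1)[OF assms]
  have "(\<lambda>p. ennreal (indicator (Ej D j) (snd p) * ((sqrt (fS D S (snd p)) - sqrt (est (fst p) (snd p)))\<^sup>2 / 2)))
      \<in> borel_measurable (PiM {..<n} (\<lambda>_. lborel) \<Otimes>\<^sub>M lborel)"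
    by measurable
  then show ?thesis unfolding Aj_def
    by (intro lborel.borel_measurable_nn_integral) (simp add: case_prod_beta')
qed

end

context lbsetup begin

lemma PP_nn: assumes D: "even D" "0 < D" shows "0 \<le> PP n D S X"
  unfolding PP_def using H_props(2)[OF fS_H[OF D]] by (intro prod_nonneg) (auto intro: less_imp_le)

lemma PP_int: assumes D: "even D" "0 < D"
  shows "(\<integral>\<^sup>+ X. ennreal (PP n D S X) \<partial>PiM {..<n} (\<lambda>_. lborel)) = 1"
  unfolding PP_def using H_props[OF fS_H[OF D]]
  by (subst prod_int) (auto intro: less_imp_le)

lemma PP_aff:
  assumes D: "even D" "0 < D" and j: "j \<in> {1..D}" and jS: "j \<notin> S"
    and small: "real n * eta D \<le> 1/20"
  shows "ennreal (19/20) \<le> (\<integral>\<^sup>+ X. ennreal (sqrt (PP n D S X * PP n D (insert j S) X)) \<partial>PiM {..<n} (\<lambda>_. lborel))"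
proof -
  have eta0: "0 \<le> eta D" unfolding eta_def using \<xi>_pos \<alpha>_pos by simp
  have "(\<integral>\<^sup>+ X. ennreal (sqrt (PP n D S X * PP n D (insert j S) X)) \<partial>PiM {..<n} (\<lambda>_. lborel))
      = (\<integral>\<^sup>+ X. ennreal (\<Prod>i<n. sqrt (fS D S (X i) * fS D (insert j S) (X i))) \<partial>PiM {..<n} (\<lambda>_. lborel))"
    by (simp add: PP_def prod.distrib[symmetric] sqrt_prod)
  also have "\<dots> = (\<integral>\<^sup>+ x. ennreal (sqrt (fS D S x * fS D (insert j S) x)) \<partial>lborel) ^ n"
    using H_props(2)[OF fS_H[OF D]] by (intro prod_affinity) (auto intro: less_imp_le)
  also have "\<dots> \<ge> ennreal (1 - eta D) ^ n"
    by (intro power_mono affinity_bound[OF D j jS]) simp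
  finally have 1: "ennreal (1 - eta D) ^ n \<le> (\<integral>\<^sup>+ X. ennreal (sqrt (PP n D S X * PP n D (insert j S) X)) \<partial>PiM {..<n} (\<lambda>_. lborel))" .
  show ?thesis
  proof (cases "n = 0")
    case True
    then have "ennreal (19/20) \<le> ennreal (1 - eta D) ^ n" by simp
    then show ?thesis using 1 by (rule order_trans)
  next
    case False
    then have "1 \<le> real n" by simp
    then have "1 * eta D \<le> real n * eta D" using eta0 by (rule mult_right_mono)
    then have "eta D \<le> 1/20" using small by simp
    then have e1: "0 \<le> 1 - eta D" by simp
    have "1 + real n * (- eta D) \<le> (1 + - eta D) ^ n"
      by (rule Bernoulli_inequality) (use \<open>eta D \<le> 1/20\<close> in simp)
    then have "19/20 \<le> (1 - eta D) ^ n" using small by simp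
    then have "ennreal (19/20) \<le> ennreal ((1 - eta D) ^ n)" by (rule ennreal_leI)
    also have "\<dots> = ennreal (1 - eta D) ^ n" using e1 by (simp add: ennreal_power)
    finally show ?thesis using 1 by (rule order_trans)
  qed
qed

lemma pair_bound:
  assumes D: "even D" "0 < D" and j: "j \<in> {1..D}" and jS: "j \<notin> S"
    and small: "real n * eta D \<le> 1/20" and est: "est \<in> estimators n"
  shows "ennreal (delta D / 2) \<le>
      (\<integral>\<^sup>+X. Aj D j S (est X) \<partial>PiM {..<n} (\<lambda>_. density lborel (\<lambda>x. ennreal (fS D S x))))
    + (\<integral>\<^sup>+X. Aj D j (insert j S) (est X) \<partial>PiM {..<n} (\<lambda>_. density lborel (\<lambda>x. ennreal (fS D (insert j S) x))))"
proof -
  note [measurable] = Aj_meas[OF est]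
  let ?M = "PiM {..<n} (\<lambda>_. lborel :: real measure)"
  let ?P = "PP n D S" and ?Q = "PP n D (insert j S)"
  have d0: "0 \<le> delta D" unfolding delta_def using \<xi>_pos \<alpha>_pos by simp
  have mn: "ennreal (1/2) \<le> (\<integral>\<^sup>+ X. ennreal (min (?P X) (?Q X)) \<partial>?M)"
    by (rule min_integral_lower[OF PP_meas PP_meas PP_nn[OF D] PP_nn[OF D] PP_int[OF D] PP_int[OF D] PP_aff[OF D j jS small]])
  have "ennreal (delta D / 2) = ennreal (delta D) * ennreal (1/2)"
    using d0 by (subst ennreal_mult[symmetric]) auto
  also have "\<dots> \<le> ennreal (delta D) * (\<integral>\<^sup>+ X. ennreal (min (?P X) (?Q X)) \<partial>?M)"
    by (rule mult_left_mono[OF mn]) simp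
  also have "\<dots> = (\<integral>\<^sup>+ X. ennreal (min (?P X) (?Q X)) * ennreal (delta D) \<partial>?M)"
    by (subst nn_integral_cmult[symmetric]) (auto simp: mult.commute)
  also have "\<dots> \<le> (\<integral>\<^sup>+ X. ennreal (?P X) * Aj D j S (est X) + ennreal (?Q X) * Aj D j (insert j S) (est X) \<partial>?M)"
  proof (rule nn_integral_mono)
    fix X assume X: "X \<in> space ?M"
    have hm: "est X \<in> borel_measurable borel" by (rule est_meas2[OF est X])
    have sb: "ennreal (delta D) \<le> Aj D j S (est X) + Aj D j (insert j S) (est X)"
      by (rule sep_bound[OF D j jS hm est_meas(2)[OF est]])
    have "ennreal (min (?P X) (?Q X)) * ennreal (delta D) \<le> ennreal (min (?P X) (?Q X)) * (Aj D j S (est X) + Aj D j (insert j S) (est X))"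
      by (rule mult_left_mono[OF sb]) simp
    also have "\<dots> = ennreal (min (?P X) (?Q X)) * Aj D j S (est X) + ennreal (min (?P X) (?Q X)) * Aj D j (insert j S) (est X)"
      by (simp add: distrib_left)
    also have "\<dots> \<le> ennreal (?P X) * Aj D j S (est X) + ennreal (?Q X) * Aj D j (insert j S) (est X)"
      by (intro add_mono mult_right_mono ennreal_leI) auto
    finally show "ennreal (min (?P X) (?Q X)) * ennreal (delta D) \<le> ennreal (?P X) * Aj D j S (est X) + ennreal (?Q X) * Aj D j (insert j S) (est X)" .
  qed
  also have "\<dots> = (\<integral>\<^sup>+ X. ennreal (?P X) * Aj D j S (est X) \<partial>?M) + (\<integral>\<^sup>+ X. ennreal (?Q X) * Aj D j (insert j S) (est X) \<partial>?M)"
    by (rule nn_integral_add) auto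
  also have "\<dots> = (\<integral>\<^sup>+X. Aj D j S (est X) \<partial>PiM {..<n} (\<lambda>_. density lborel (\<lambda>x. ennreal (fS D S x))))
    + (\<integral>\<^sup>+X. Aj D j (insert j S) (est X) \<partial>PiM {..<n} (\<lambda>_. density lborel (\<lambda>x. ennreal (fS D (insert j S) x))))"
    by (simp add: expect_dens[OF D])
  finally show ?thesis .
qed

end

context lbsetup begin

definition PM :: "nat \<Rightarrow> nat \<Rightarrow> nat set \<Rightarrow> (nat \<Rightarrow> real) measure" where
  "PM n D S = PiM {..<n} (\<lambda>_. density lborel (\<lambda>x. ennreal (fS D S x)))"

lemma PM_sets: "sets (PM n D S) = sets (PiM {..<n} (\<lambda>_. lborel))"
  unfolding PM_def by (rule sets_PiM_cong) auto

lemma PM_space: "space (PM n D S) = space (PiM {..<n} (\<lambda>_. lborel))"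
  by (rule sets_eq_imp_space_eq[OF PM_sets])

lemma risk_ge_sum:
  assumes D: "even D" "0 < D" and est: "est \<in> estimators n"
  shows "(\<Sum>j=1..D. \<integral>\<^sup>+X. Aj D j S (est X) \<partial>PM n D S) \<le> risk n (fS D S) est"
proof -
  have m: "(\<lambda>X. Aj D j S (est X)) \<in> borel_measurable (PM n D S)" for j
    using Aj_meas[OF est] by (subst measurable_cong_sets[OF PM_sets refl])
  have "(\<Sum>j=1..D. \<integral>\<^sup>+X. Aj D j S (est X) \<partial>PM n D S) = (\<integral>\<^sup>+X. (\<Sum>j=1..D. Aj D j S (est X)) \<partial>PM n D S)"
    by (rule nn_integral_sum[symmetric]) (use m in auto)
  also have "\<dots> \<le> (\<integral>\<^sup>+X. hellinger_sq (fS D S) (est X) \<partial>PM n D S)"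
  proof (rule nn_integral_mono)
    fix X assume "X \<in> space (PM n D S)"
    then have X: "X \<in> space (PiM {..<n} (\<lambda>_. lborel :: real measure))" using PM_space by blast
    show "(\<Sum>j=1..D. Aj D j S (est X)) \<le> hellinger_sq (fS D S) (est X)"
      by (rule sum_bound[OF D(2) est_meas2[OF est X] est_meas(2)[OF est]])
  qed
  finally show ?thesis unfolding risk_def PM_def .
qed

lemma pow_split:
  fixes g :: "nat set \<Rightarrow> ennreal"
  assumes j: "j \<in> A" and fin: "finite A"
  shows "(\<Sum>S\<in>Pow A. g S) = (\<Sum>S\<in>Pow (A - {j}). g S + g (insert j S))"
proof -
  let ?T = "A - {j}"
  have A: "A = insert j ?T" using j by blast
  have "Pow A = Pow ?T \<union> insert j ` Pow ?T" by (subst A) (rule Pow_insert)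
  moreover have "Pow ?T \<inter> insert j ` Pow ?T = {}" by auto
  moreover have "inj_on (insert j) (Pow ?T)" by (auto simp: inj_on_def)
  ultimately have "(\<Sum>S\<in>Pow A. g S) = (\<Sum>S\<in>Pow ?T. g S) + (\<Sum>S\<in>Pow ?T. g (insert j S))"
    using fin by (simp add: sum.union_disjoint sum.reindex)
  then show ?thesis by (simp add: sum.distrib)
qed

lemma assouad:
  assumes D: "even D" "0 < D" and small: "real n * eta D \<le> 1/20" and est: "est \<in> estimators n"
  shows "ennreal (real D * delta D / 4) \<le> (SUP s\<in>Hclass \<beta> P'. risk n s est)"
proof -
  let ?sup = "(SUP s\<in>Hclass \<beta> P'. risk n s est)"
  let ?E = "\<lambda>S j. \<integral>\<^sup>+X. Aj D j S (est X) \<partial>PM n D S"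
  have d0: "0 \<le> delta D" unfolding delta_def using \<xi>_pos \<alpha>_pos by simp
  have cT: "card ({1..D} - {j}) = D - 1" if "j \<in> {1..D}" for j using that by simp
  have inner: "of_nat (2 ^ (D - 1)) * ennreal (delta D / 2) \<le> (\<Sum>S\<in>Pow {1..D}. ?E S j)" if j: "j \<in> {1..D}" for j
  proof -
    have "of_nat (2 ^ (D - 1)) * ennreal (delta D / 2) = (\<Sum>S\<in>Pow ({1..D} - {j}). ennreal (delta D / 2))"
      using cT[OF j] by (simp add: card_Pow)
    also have "\<dots> \<le> (\<Sum>S\<in>Pow ({1..D} - {j}). ?E S j + ?E (insert j S) j)"
      by (intro sum_mono) (unfold PM_def, rule pair_bound[OF D j _ small est], auto)
    also have "\<dots> = (\<Sum>S\<in>Pow {1..D}. ?E S j)"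
      by (rule pow_split[symmetric, OF j]) simp
    finally show ?thesis .
  qed
  have "of_nat D * (of_nat (2 ^ (D - 1)) * ennreal (delta D / 2)) = (\<Sum>j=1..D. of_nat (2 ^ (D - 1)) * ennreal (delta D / 2))"
    by simp
  also have "\<dots> \<le> (\<Sum>j=1..D. \<Sum>S\<in>Pow {1..D}. ?E S j)"
    by (rule sum_mono) (rule inner)
  also have "\<dots> = (\<Sum>S\<in>Pow {1..D}. \<Sum>j=1..D. ?E S j)"
    by (rule sum.swap)
  also have "\<dots> \<le> (\<Sum>S\<in>Pow {1..D}. risk n (fS D S) est)"
    by (rule sum_mono) (rule risk_ge_sum[OF D est])
  also have "\<dots> \<le> (\<Sum>S\<in>Pow {1..D}. ?sup)"
    by (rule sum_mono) (rule SUP_upper, rule fS_H[OF D])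
  also have "\<dots> = of_nat (2 ^ D) * ?sup"
    by (simp add: card_Pow)
  finally have main: "of_nat D * (of_nat (2 ^ (D - 1)) * ennreal (delta D / 2)) \<le> of_nat (2 ^ D) * ?sup" .
  have "(2::real) ^ D = 2 * 2 ^ (D - 1)" using D(2) by (cases D) auto
  then have "of_nat D * (of_nat (2 ^ (D - 1)) * ennreal (delta D / 2)) = of_nat (2 ^ D) * ennreal (real D * delta D / 4)"
    using d0 by (simp add: ennreal_mult[symmetric] ennreal_of_nat_eq_real_of_nat field_simps)
  with main have "of_nat (2 ^ D) * ennreal (real D * delta D / 4) \<le> of_nat (2 ^ D) * ?sup" by simp
  then show ?thesis by (subst (asm) ennreal_mult_le_mult_iff) (auto simp: power_eq_top_ennreal)
qed

end

context lbsetup begin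

abbreviation "Ac \<equiv> Aconst \<phi> \<beta>"

lemma cc_sq: assumes "0 < D" shows "(cc D)\<^sup>2 = \<xi>\<^sup>2 / Ac\<^sup>2 * real D powr (-2*\<beta>)"
proof -
  have "(real D powr (-\<beta>))\<^sup>2 = real D powr (-2*\<beta>)"
    using assms by (simp add: powr_powr[symmetric] powr_realpow[symmetric] power2_eq_square powr_add[symmetric])
  then show ?thesis unfolding cc_def by (simp add: power_divide power_mult_distrib)
qed

lemma eta_eq: assumes "0 < D" shows "eta D = \<xi> * \<alpha> / (2 * Ac\<^sup>2) / real D powr (2*\<beta>+1)"
proof -
  have Dp: "0 < real D" using assms by simp
  have "real D powr (-2*\<beta>) / real D = 1 / real D powr (2*\<beta>+1)"
    using Dp by (simp add: powr_add powr_minus divide_simps)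
  moreover have "eta D = \<xi> * \<alpha> / (2 * Ac\<^sup>2) * (real D powr (-2*\<beta>) / real D)"
    unfolding eta_def cc_sq[OF assms] using \<xi>_pos by (simp add: power2_eq_square field_simps)
  ultimately show ?thesis by simp
qed

lemma Ddelta_eq: assumes "0 < D" shows "real D * delta D / 4 = \<xi> * \<alpha> / (32 * Ac\<^sup>2) * real D powr (-2*\<beta>)"
  unfolding delta_def cc_sq[OF assms] using assms \<xi>_pos by (simp add: power2_eq_square field_simps)

lemma rate:
  "\<exists>\<kappa>>0. \<forall>n\<ge>1. \<forall>est\<in>estimators n.
     ennreal (\<kappa> * real n powr (- (2*\<beta> / (2*\<beta> + 1)))) \<le> (SUP s\<in>Hclass \<beta> P'. risk n s est)"
proof -
  define p where "p = 2*\<beta> + 1"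
  have p1: "1 < p" unfolding p_def using \<beta>_pos by simp
  define K where "K = max 1 (10 * \<xi> * \<alpha> / Ac\<^sup>2)"
  have K1: "1 \<le> K" unfolding K_def by simp
  define \<kappa> where "\<kappa> = \<xi> * \<alpha> / (32 * Ac\<^sup>2) * (4 powr (-2*\<beta>) * K powr (-2*\<beta>/p))"
  have c0: "0 < \<xi> * \<alpha> / (32 * Ac\<^sup>2)" using \<xi>_pos \<alpha>_pos A_pos by simp
  have "0 < \<kappa>" unfolding \<kappa>_def using c0 K1 by (intro mult_pos_pos) auto
  moreover have "ennreal (\<kappa> * real n powr (- (2*\<beta> / (2*\<beta> + 1)))) \<le> (SUP s\<in>Hclass \<beta> P'. risk n s est)"
    if n: "1 \<le> n" and est: "est \<in> estimators n" for n est
  proof -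
    define y where "y = (K * real n) powr (1/p)"
    have Kn: "1 \<le> K * real n" using K1 n by (metis mult_mono' of_nat_1 of_nat_le_iff mult_1_left zero_le_one)
    have y1: "1 \<le> y" unfolding y_def using Kn p1 by (simp add: ge_one_powr_ge_zero)
    define D where "D = 2 * nat \<lceil>y\<rceil>"
    have cy: "y \<le> real (nat \<lceil>y\<rceil>)" "real (nat \<lceil>y\<rceil>) \<le> y + 1" using y1 by linarith+
    have De: "real D = 2 * real (nat \<lceil>y\<rceil>)" unfolding D_def by simp
    have Dge: "y \<le> real D" "real D \<le> 4 * y" using De cy y1 by linarith+
    have Dpos: "0 < D" using Dge y1 by simp
    have Dev: "even D" unfolding D_def by simp
    have ypow: "y powr p = K * real n" unfolding y_def using Kn p1 by (simp add: powr_powr)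
    have "K * real n \<le> real D powr p" unfolding ypow[symmetric]
      using Dge y1 p1 by (intro powr_mono2) auto
    moreover have "10 * \<xi> * \<alpha> / Ac\<^sup>2 * real n \<le> K * real n" unfolding K_def by (intro mult_right_mono) auto
    ultimately have big: "10 * \<xi> * \<alpha> / Ac\<^sup>2 * real n \<le> real D powr p" by linarith
    have small: "real n * eta D \<le> 1/20"
    proof -
      have Dp: "0 < real D powr p" using Dpos by simp
      have "real n * eta D = \<xi> * \<alpha> / (2 * Ac\<^sup>2) * real n / real D powr p"
        unfolding eta_eq[OF Dpos] p_def by simp
      also have "\<dots> \<le> 1/20"
        using big Dp A_pos by (simp add: field_simps)
      finally show ?thesis .
    qed
    have A: "ennreal (real D * delta D / 4) \<le> (SUP s\<in>Hclass \<beta> P'. risk n s est)"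
      by (rule assouad[OF Dev Dpos small est])
    have "(4 * y) powr (-2*\<beta>) \<le> real D powr (-2*\<beta>)"
      using Dge y1 \<beta>_pos by (intro powr_mono2') auto
    moreover have "(4 * y) powr (-2*\<beta>) = 4 powr (-2*\<beta>) * K powr (-2*\<beta>/p) * real n powr (- (2*\<beta> / (2*\<beta> + 1)))"
    proof -
      have "(4 * y) powr (-2*\<beta>) = 4 powr (-2*\<beta>) * y powr (-2*\<beta>)" using y1 by (simp add: powr_mult)
      also have "y powr (-2*\<beta>) = (K * real n) powr (-2*\<beta>/p)" unfolding y_def using Kn by (simp add: powr_powr)
      also have "\<dots> = K powr (-2*\<beta>/p) * real n powr (-2*\<beta>/p)" using K1 n by (simp add: powr_mult)
      also have "real n powr (-2*\<beta>/p) = real n powr (- (2*\<beta> / (2*\<beta> + 1)))" by (simp only: p_def minus_divide_left mult_minus_left)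
      finally show ?thesis by (simp only: mult.assoc)
    qed
    ultimately have Z: "4 powr (-2*\<beta>) * K powr (-2*\<beta>/p) * real n powr (- (2*\<beta> / (2*\<beta> + 1))) \<le> real D powr (-2*\<beta>)"
      by simp
    have "\<kappa> * real n powr (- (2*\<beta> / (2*\<beta> + 1))) = \<xi> * \<alpha> / (32 * Ac\<^sup>2) * (4 powr (-2*\<beta>) * K powr (-2*\<beta>/p) * real n powr (- (2*\<beta> / (2*\<beta> + 1))))"
      unfolding \<kappa>_def by (simp only: mult.assoc)
    also have "\<dots> \<le> \<xi> * \<alpha> / (32 * Ac\<^sup>2) * real D powr (-2*\<beta>)"
      using c0 Z by (intro mult_left_mono) auto
    finally have "\<kappa> * real n powr (- (2*\<beta> / (2*\<beta> + 1))) \<le> real D * delta D / 4"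
      unfolding Ddelta_eq[OF Dpos] .
    then have "ennreal (\<kappa> * real n powr (- (2*\<beta> / (2*\<beta> + 1)))) \<le> ennreal (real D * delta D / 4)"
      by (rule ennreal_leI)
    then show ?thesis using A by (rule order_trans)
  qed
  ultimately show ?thesis by blast
qed

end


theorem theorem3:
  fixes \<beta>lo \<beta>hi \<alpha> \<xi> :: real and \<phi> \<omega> :: "real \<Rightarrow> real"
    and Lt :: "real poly" and \<epsilon>t Ct Mt :: real and P' :: params
  assumes "0 < \<beta>lo" "\<beta>lo < \<beta>hi" "0 < \<alpha>" "0 < \<xi>"
    and phi_smooth: "\<forall>k x. dn k \<phi> differentiable at x"
    and phi_supp: "\<exists>a b. 1/4 < a \<and> b < 3/4 \<and> (\<forall>x. x \<notin> {a..b} \<longrightarrow> \<phi> x = 0)"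
    and phi_int0: "integral\<^sup>L lborel \<phi> = 0"
    and phi_sq1: "integral\<^sup>L lborel (\<lambda>x. (\<phi> x)\<^sup>2) = 1"
    and A_gt1: "\<forall>\<beta>\<in>{\<beta>lo..\<beta>hi}. Aconst \<phi> \<beta> > 1"
    and omega_T: "\<omega> \<in> Tclass \<alpha> \<xi>"
    and omega_H: "\<forall>\<beta>\<in>{\<beta>lo..\<beta>hi}. \<omega> \<in> Hclass \<beta>
        \<lparr>p_gamma = \<alpha>/4, p_lplus = ln (2*\<xi>), p_L = Lt, p_eps = \<epsilon>t, p_C = Ct,
         p_alpha = \<alpha>, p_xi = \<xi>, p_M = Mt\<rparr>"
    and J_sub: "\<forall>\<beta>\<in>{\<beta>lo..\<beta>hi}. \<forall>D. even D \<and> 0 < D \<longrightarrow> Jclass \<phi> \<omega> \<alpha> \<xi> \<beta> D \<subseteq> Hclass \<beta> P'"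
  shows "\<forall>\<beta>\<in>{\<beta>lo..\<beta>hi}. \<exists>\<kappa>>0. \<forall>n\<ge>1. \<forall>est\<in>estimators n.
           ennreal (\<kappa> * real n powr (- (2*\<beta> / (2*\<beta> + 1)))) \<le> (SUP s\<in>Hclass \<beta> P'. risk n s est)"
proof
  fix \<beta> assume \<beta>: "\<beta> \<in> {\<beta>lo..\<beta>hi}"
  obtain a b where ab: "1/4 < a" "b < 3/4" "\<forall>x. x \<notin> {a..b} \<longrightarrow> \<phi> x = 0" using phi_supp by blast
  have cont: "continuous_on UNIV \<phi>"
  proof (rule continuous_at_imp_continuous_on, rule ballI)
    fix x :: real
    have "dn 0 \<phi> differentiable at x" using phi_smooth by blast
    then have "\<phi> differentiable at x" by (simp add: dn_def)
    then show "isCont \<phi> x" by (rule differentiable_imp_continuous_within)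
  qed
  have int: "integrable lborel (\<lambda>x. (\<phi> x)\<^sup>2)"
    using phi_sq1 not_integrable_integral_eq by fastforce
  have sq: "(\<integral>\<^sup>+x. ennreal ((\<phi> x)\<^sup>2) \<partial>lborel) = 1"
    using nn_integral_eq_integral[OF int] phi_sq1 by simp
  have mid: "\<forall>x\<in>{- 3 * \<alpha> / 4 .. 3 * \<alpha> / 4}. \<omega> x = 2 * \<xi>"
    using omega_T unfolding Tclass_def by blast
  interpret lbsetup \<phi> \<omega> \<alpha> \<xi> \<beta> P' a b
  proof
    show "0 < \<beta>" using \<beta> \<open>0 < \<beta>lo\<close> by simp
    show "0 < Aconst \<phi> \<beta>" using A_gt1 \<beta> by fastforce
    show "\<forall>D. even D \<and> 0 < D \<longrightarrow> Jclass \<phi> \<omega> \<alpha> \<xi> \<beta> D \<subseteq> Hclass \<beta> P'" using J_sub \<beta> by blast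
  qed (use assms ab cont sq mid in auto)
  show "\<exists>\<kappa>>0. \<forall>n\<ge>1. \<forall>est\<in>estimators n.
           ennreal (\<kappa> * real n powr (- (2*\<beta> / (2*\<beta> + 1)))) \<le> (SUP s\<in>Hclass \<beta> P'. risk n s est)"
    by (rule rate)
qed


end
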